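(* Let $n\geqslant 3$, let $D=\{x,y,e_2,\ldots,e_{n-1}\}$ and let $V$ be the set of monoid relations on $D$: (V1) $e_i^2=e_i$ for $2\leqslant i\leqslant n-1$; (V2) $xyx=x$ and $yxy=y$; (V3) $yx^2y=xy^2x$; (V4) $e_ie_j=e_je_i$ for $2\leqslant i<j\leqslant n-1$; (V5) $xye_i=e_ixy$ and $yxe_i=e_iyx$ for $2\leqslant i\leqslant n-1$; (V6) $xe_{i+1}=e_ix$ for $2\leqslant i\leqslant n-2$; (V7) $x^2y=e_{n-1}x$ and $yx^2=xe_2$; (V8) $yxe_2\cdots e_{n-1}xy=xe_2\cdots e_{n-1}xy$. Then $\langle D\mid V\rangle$ is a monoid presentation of $\mathcal{OCI}_n$ (with respect to the map sending each letter to the transformation of the same name). It has $n$ generators and $\frac12(n^2+3n)$ relations.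
   Context: Let $\Omega_n=\{1<\cdots<n\}$, $\mathcal{I}_n$ the symmetric inverse monoid on $\Omega_n$ (maps on the right, composed left to right). $g$ is the permutation $ig=i+1$ ($1\leqslant i\leqslant n-1$), $ng=1$; $\mathcal{C}_n=\{1,g,\ldots,g^{n-1}\}$; $\mathcal{CI}_n=\{\alpha\in\mathcal{I}_n\mid \alpha=\sigma|_{\mathrm{Dom}(\alpha)}\text{ for some }\sigma\in\mathcal{C}_n\}$; $\mathcal{OCI}_n$ is the submonoid of order-preserving elements of $\mathcal{CI}_n$. $e_i$ is the partial identity on $\Omega_n\setminus\{i\}$; $x$ has domain $\{1,\ldots,n-1\}$ with $ix=i+1$; $y=x^{-1}$ has domain $\{2,\ldots,n\}$ with $iy=i-1$. A presentation $\langle D\mid V\rangle$ defines $M$ via an injective map $D\to M$ whose image generates $M$ if the kernel of the induced homomorphism $D^*\to M$ is the smallest congruence on $D^*$ containing $V$. *)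

theory Defs
  imports Main
begin

type_synonym pmap = "nat \<Rightarrow> nat option"

text \<open>Product composed left to right: i (\<alpha>\<beta>) = (i\<alpha>)\<beta>.\<close>
definition pcomp :: "pmap \<Rightarrow> pmap \<Rightarrow> pmap" where
  "pcomp \<alpha> \<beta> = (\<lambda>i. case \<alpha> i of None \<Rightarrow> None | Some j \<Rightarrow> \<beta> j)"

definition pid :: "nat \<Rightarrow> pmap" where
  "pid n = (\<lambda>i. if 1 \<le> i \<and> i \<le> n then Some i else None)"

definition sym_inv :: "nat \<Rightarrow> pmap set" where
  "sym_inv n = {\<alpha>. dom \<alpha> \<subseteq> {1..n} \<and> ran \<alpha> \<subseteq> {1..n} \<and> inj_on \<alpha> (dom \<alpha>)}"

text \<open>The permutation g^k of \<Omega>_n, where i g = i+1 (i<n), n g = 1.\<close>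
definition gpow :: "nat \<Rightarrow> nat \<Rightarrow> nat \<Rightarrow> nat" where
  "gpow n k i = ((i - 1 + k) mod n) + 1"

definition CI :: "nat \<Rightarrow> pmap set" where
  "CI n = {\<alpha> \<in> sym_inv n. \<exists>k<n. \<forall>i\<in>dom \<alpha>. \<alpha> i = Some (gpow n k i)}"

definition order_preserving :: "pmap \<Rightarrow> bool" where
  "order_preserving \<alpha> \<longleftrightarrow> (\<forall>i\<in>dom \<alpha>. \<forall>j\<in>dom \<alpha>. i \<le> j \<longrightarrow> the (\<alpha> i) \<le> the (\<alpha> j))"

definition OCI :: "nat \<Rightarrow> pmap set" where
  "OCI n = {\<alpha> \<in> CI n. order_preserving \<alpha>}"

datatype gen = X | Y | E nat

definition gen_map :: "nat \<Rightarrow> gen \<Rightarrow> pmap" where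
  "gen_map n a = (case a of
      X \<Rightarrow> (\<lambda>i. if 1 \<le> i \<and> i \<le> n - 1 then Some (i + 1) else None)
    | Y \<Rightarrow> (\<lambda>i. if 2 \<le> i \<and> i \<le> n then Some (i - 1) else None)
    | E k \<Rightarrow> (\<lambda>i. if 1 \<le> i \<and> i \<le> n \<and> i \<noteq> k then Some i else None))"

definition word_eval :: "('m \<Rightarrow> 'm \<Rightarrow> 'm) \<Rightarrow> 'm \<Rightarrow> ('d \<Rightarrow> 'm) \<Rightarrow> 'd list \<Rightarrow> 'm" where
  "word_eval mult one f w = foldr (\<lambda>a r. mult (f a) r) w one"

inductive_set gen_cong :: "'d set \<Rightarrow> ('d list \<times> 'd list) set \<Rightarrow> ('d list \<times> 'd list) set"
  for D V where
  base: "(u, v) \<in> V \<Longrightarrow> (u, v) \<in> gen_cong D V"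
| refl: "u \<in> lists D \<Longrightarrow> (u, u) \<in> gen_cong D V"
| sym: "(u, v) \<in> gen_cong D V \<Longrightarrow> (v, u) \<in> gen_cong D V"
| trans: "(u, v) \<in> gen_cong D V \<Longrightarrow> (v, w) \<in> gen_cong D V \<Longrightarrow> (u, w) \<in> gen_cong D V"
| ctxt: "(u, v) \<in> gen_cong D V \<Longrightarrow> a \<in> lists D \<Longrightarrow> b \<in> lists D \<Longrightarrow>
         (a @ u @ b, a @ v @ b) \<in> gen_cong D V"

definition monoid_presentation ::
  "'d set \<Rightarrow> ('d list \<times> 'd list) set \<Rightarrow> ('d \<Rightarrow> 'm) \<Rightarrow> ('m \<Rightarrow> 'm \<Rightarrow> 'm) \<Rightarrow> 'm \<Rightarrow> 'm set \<Rightarrow> bool"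
where
  "monoid_presentation D V f mult one M \<longleftrightarrow>
     V \<subseteq> lists D \<times> lists D \<and>
     inj_on f D \<and> f ` D \<subseteq> M \<and>
     word_eval mult one f ` lists D = M \<and>
     (\<forall>u\<in>lists D. \<forall>v\<in>lists D.
        word_eval mult one f u = word_eval mult one f v \<longleftrightarrow> (u, v) \<in> gen_cong D V)"

definition Dgens :: "nat \<Rightarrow> gen set" where
  "Dgens n = {X, Y} \<union> E ` {2..n-1}"

definition Vrels :: "nat \<Rightarrow> (gen list \<times> gen list) set" where
  "Vrels n =
     {([E i, E i], [E i]) | i. 2 \<le> i \<and> i \<le> n - 1}
   \<union> {([X, Y, X], [X]), ([Y, X, Y], [Y])}
   \<union> {([Y, X, X, Y], [X, Y, Y, X])}
   \<union> {([E i, E j], [E j, E i]) | i j. 2 \<le> i \<and> i < j \<and> j \<le> n - 1}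
   \<union> {([X, Y, E i], [E i, X, Y]) | i. 2 \<le> i \<and> i \<le> n - 1}
   \<union> {([Y, X, E i], [E i, Y, X]) | i. 2 \<le> i \<and> i \<le> n - 1}
   \<union> {([X, E (i + 1)], [E i, X]) | i. 2 \<le> i \<and> i \<le> n - 2}
   \<union> {([X, X, Y], [E (n - 1), X]), ([Y, X, X], [X, E 2])}
   \<union> {([Y, X] @ map E [2..<n] @ [X, Y], [X] @ map E [2..<n] @ [X, Y])}"

end

theory Submission
  imports Defs
begin

locale P = fixes n :: nat assumes n3: "3 \<le> n"
begin

definition eqv (infix "\<approx>" 50) where "u \<approx> v \<longleftrightarrow> (u,v) \<in> gen_cong (Dgens n) (Vrels n)"

lemma V_lists: "Vrels n \<subseteq> lists (Dgens n) \<times> lists (Dgens n)"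
  using n3 unfolding Vrels_def Dgens_def by auto

lemma cong_lists: "u \<approx> v \<Longrightarrow> u \<in> lists (Dgens n) \<and> v \<in> lists (Dgens n)"
  unfolding eqv_def by (induction rule: gen_cong.induct) (use V_lists in auto)

lemma cl1: "u \<approx> v \<Longrightarrow> u \<in> lists (Dgens n)" using cong_lists by blast
lemma cl2: "u \<approx> v \<Longrightarrow> v \<in> lists (Dgens n)" using cong_lists by blast

lemma ev_trans[trans]: "u \<approx> v \<Longrightarrow> v \<approx> w \<Longrightarrow> u \<approx> w" unfolding eqv_def by (rule gen_cong.trans)
lemma ev_sym: "u \<approx> v \<Longrightarrow> v \<approx> u" unfolding eqv_def by (rule gen_cong.sym)
lemma ev_refl[simp]: "u \<in> lists (Dgens n) \<Longrightarrow> u \<approx> u" unfolding eqv_def by (rule gen_cong.refl)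

lemma ev_ctxt: "u \<approx> v \<Longrightarrow> p \<in> lists (Dgens n) \<Longrightarrow> q \<in> lists (Dgens n) \<Longrightarrow> p @ u @ q \<approx> p @ v @ q"
  unfolding eqv_def by (rule gen_cong.ctxt)
lemma ev_l: "u \<approx> v \<Longrightarrow> p \<in> lists (Dgens n) \<Longrightarrow> p @ u \<approx> p @ v"
  using gen_cong.ctxt[of u v "Dgens n" "Vrels n" p "[]"] unfolding eqv_def by simp
lemma ev_r: "u \<approx> v \<Longrightarrow> q \<in> lists (Dgens n) \<Longrightarrow> u @ q \<approx> v @ q"
  using gen_cong.ctxt[of u v "Dgens n" "Vrels n" "[]" q] unfolding eqv_def by simp
lemma ev_app: "u \<approx> u' \<Longrightarrow> v \<approx> v' \<Longrightarrow> u @ v \<approx> u' @ v'"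
  by (meson cl1 cl2 ev_l ev_r ev_trans)

lemma ev_rel: "(u,v) \<in> Vrels n \<Longrightarrow> u \<approx> v" unfolding eqv_def by (rule gen_cong.base)

lemma X_in[simp]: "X \<in> Dgens n" and Y_in[simp]: "Y \<in> Dgens n"
  by (auto simp: Dgens_def)
lemma E_in[simp]: "2 \<le> i \<Longrightarrow> i \<le> n - 1 \<Longrightarrow> E i \<in> Dgens n"
  by (auto simp: Dgens_def)

definition eps :: "nat \<Rightarrow> gen list" where
  "eps i = (if i = 1 then [Y,X] else if i = n then [X,Y] else [E i])"

lemma eps_in[simp]: "1 \<le> i \<Longrightarrow> i \<le> n \<Longrightarrow> eps i \<in> lists (Dgens n)"
  by (auto simp: eps_def)
lemma eps_in'[simp]: "0 < i \<Longrightarrow> i \<le> n \<Longrightarrow> eps i \<in> lists (Dgens n)"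
  by (auto simp: eps_def)
lemma eps_set: "1 \<le> i \<Longrightarrow> i \<le> n \<Longrightarrow> x \<in> set (eps i) \<Longrightarrow> x \<in> Dgens n"
  using eps_in[of i] by (auto simp del: eps_in eps_in')

lemma rep_in[simp]: "replicate k X \<in> lists (Dgens n)" "replicate k Y \<in> lists (Dgens n)"
  by auto

lemma V1: "2 \<le> i \<Longrightarrow> i \<le> n - 1 \<Longrightarrow> [E i, E i] \<approx> [E i]"
  by (rule ev_rel) (simp add: Vrels_def)
lemma xyx: "[X,Y,X] \<approx> [X]" by (rule ev_rel) (simp add: Vrels_def)
lemma yxy: "[Y,X,Y] \<approx> [Y]" by (rule ev_rel) (simp add: Vrels_def)
lemma V3: "[Y,X,X,Y] \<approx> [X,Y,Y,X]" by (rule ev_rel) (simp add: Vrels_def)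
lemma V4: "2 \<le> i \<Longrightarrow> i < j \<Longrightarrow> j \<le> n - 1 \<Longrightarrow> [E i, E j] \<approx> [E j, E i]"
  by (rule ev_rel) (simp add: Vrels_def)
lemma V5a: "2 \<le> i \<Longrightarrow> i \<le> n - 1 \<Longrightarrow> [X, Y, E i] \<approx> [E i, X, Y]"
  by (rule ev_rel) (simp add: Vrels_def)
lemma V5b: "2 \<le> i \<Longrightarrow> i \<le> n - 1 \<Longrightarrow> [Y, X, E i] \<approx> [E i, Y, X]"
  by (rule ev_rel) (simp add: Vrels_def)
lemma V6: "2 \<le> i \<Longrightarrow> i \<le> n - 2 \<Longrightarrow> [X, E (i+1)] \<approx> [E i, X]"
  by (rule ev_rel) (simp add: Vrels_def)
lemma V7a: "[X, X, Y] \<approx> [E (n - 1), X]" by (rule ev_rel) (simp add: Vrels_def)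
lemma V7b: "[Y, X, X] \<approx> [X, E 2]" by (rule ev_rel) (simp add: Vrels_def)
lemma V8: "[Y, X] @ map E [2..<n] @ [X, Y] \<approx> [X] @ map E [2..<n] @ [X, Y]"
  by (rule ev_rel) (simp add: Vrels_def)

lemma eps_idem: "1 \<le> i \<Longrightarrow> i \<le> n \<Longrightarrow> eps i @ eps i \<approx> eps i"
proof -
  assume a: "1 \<le> i" "i \<le> n"
  consider "i = 1" | "i = n" | "i \<noteq> 1 \<and> i \<noteq> n" by blast
  then show ?thesis
  proof cases
    case 1 then show ?thesis using ev_r[OF yxy, of "[X]"] using n3 by (simp add: eps_def)
  next
    case 2 then show ?thesis using ev_r[OF xyx, of "[Y]"] using n3 by (simp add: eps_def)
  next
    case 3 then show ?thesis using a V1[of i] by (auto simp: eps_def)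
  qed
qed

lemma eps_comm: "1 \<le> i \<Longrightarrow> i \<le> n \<Longrightarrow> 1 \<le> j \<Longrightarrow> j \<le> n \<Longrightarrow> eps i @ eps j \<approx> eps j @ eps i"
proof -
  have base: "eps i @ eps j \<approx> eps j @ eps i" if h: "1 \<le> i" "i < j" "j \<le> n" for i j
  proof -
    consider "i = 1 \<and> j = n" | "i = 1 \<and> j < n" | "1 < i \<and> j = n" | "1 < i \<and> j < n" using h by linarith
    then show ?thesis
    proof cases
      case 1 then show ?thesis using n3 V3 by (auto simp: eps_def)
    next
      case 2 then show ?thesis using n3 h V5b[of j] by (auto simp: eps_def)
    next
      case 3 then show ?thesis using n3 h V5a[of i] by (auto simp: eps_def intro: ev_sym)
    next
      case 4 then show ?thesis using n3 h V4[of i j] by (auto simp: eps_def)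
    qed
  qed
  assume "1 \<le> i" "i \<le> n" "1 \<le> j" "j \<le> n"
  then show ?thesis
    by (metis append_in_lists_conv base ev_refl ev_sym eps_in linorder_neqE_nat)
qed

lemma ev_mid: "u \<approx> v \<Longrightarrow> p \<in> lists (Dgens n) \<Longrightarrow> q \<in> lists (Dgens n) \<Longrightarrow>
   w1 = p @ u @ q \<Longrightarrow> w2 = p @ v @ q \<Longrightarrow> w1 \<approx> w2"
  using ev_ctxt by blast

lemma xshift: "1 \<le> i \<Longrightarrow> i \<le> n - 1 \<Longrightarrow> [X] @ eps (i+1) \<approx> eps i @ [X]"
proof -
  assume h: "1 \<le> i" "i \<le> n - 1"
  consider "i = 1" | "i = n - 1" | "2 \<le> i \<and> i \<le> n - 2" using h n3 by linarith
  then show ?thesis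
  proof cases
    case 1 then show ?thesis using n3 ev_sym[OF V7b] by (auto simp: eps_def numeral_2_eq_2)
  next
    case 2 then show ?thesis using n3 V7a by (auto simp: eps_def)
  next
    case 3 then show ?thesis using n3 V6[of i] by (auto simp: eps_def)
  qed
qed

lemma x1: "[X] @ eps 1 \<approx> [X]" using xyx by (simp add: eps_def)
lemma nx: "eps n @ [X] \<approx> [X]" using xyx n3 by (simp add: eps_def)
lemma yn: "[Y] @ eps n \<approx> [Y]" using yxy n3 by (simp add: eps_def)
lemma oney: "eps 1 @ [Y] \<approx> [Y]" using yxy by (simp add: eps_def)

lemma yshift: "1 \<le> i \<Longrightarrow> i \<le> n - 1 \<Longrightarrow> [Y] @ eps i \<approx> eps (i+1) @ [Y]"
proof -
  assume h: "1 \<le> i" "i \<le> n - 1"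
  have "[Y] @ eps i \<approx> [Y] @ eps n @ eps i"
    by (rule ev_mid[OF ev_sym[OF yn], where p="[]" and q="eps i"]) (use h n3 in simp_all)
  also have "\<dots> \<approx> [Y] @ eps i @ eps n"
    by (rule ev_mid[OF eps_comm[of n i], where p="[Y]" and q="[]"]) (use h n3 in simp_all)
  also have "\<dots> = ([Y] @ eps i @ [X]) @ [Y]" using n3 by (simp add: eps_def)
  also have "\<dots> \<approx> ([Y] @ [X] @ eps (i+1)) @ [Y]"
    by (rule ev_mid[OF ev_sym[OF xshift[of i]], where p="[Y]" and q="[Y]"]) (use h n3 in simp_all)
  also have "\<dots> = eps 1 @ eps (i+1) @ [Y]" by (simp add: eps_def)
  also have "\<dots> \<approx> eps (i+1) @ eps 1 @ [Y]"
    by (rule ev_mid[OF eps_comm[of 1 "i+1"], where p="[]" and q="[Y]"]) (use h n3 in simp_all)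
  also have "\<dots> \<approx> eps (i+1) @ [Y]"
    by (rule ev_mid[OF oney, where p="eps (i+1)" and q="[]"]) (use h n3 in simp_all)
  finally show ?thesis .
qed

definition Ew :: "nat set \<Rightarrow> nat \<Rightarrow> nat \<Rightarrow> gen list" where
  "Ew S a b = concat (map (\<lambda>i. if i \<in> S then eps i else []) [a..<b])"

abbreviation "fr S a \<equiv> (if a \<in> S then eps a else [])"

lemma fr_in[simp]: "1 \<le> a \<Longrightarrow> a \<le> n \<Longrightarrow> fr S a \<in> lists (Dgens n)" by auto

lemma Ew_in[simp]: "1 \<le> a \<Longrightarrow> b \<le> n + 1 \<Longrightarrow> Ew S a b \<in> lists (Dgens n)"
  unfolding Ew_def
proof (clarsimp)
  fix x xa assume "Suc 0 \<le> a" "b \<le> Suc n" "x \<in> set (eps xa)" "a \<le> xa" "xa < b"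
  then show "x \<in> Dgens n" by (intro eps_set[of xa]) auto
qed

lemma Ew_empty[simp]: "b \<le> a \<Longrightarrow> Ew S a b = []" unfolding Ew_def by simp

lemma Ew_front: "a < b \<Longrightarrow> Ew S a b = fr S a @ Ew S (Suc a) b"
  unfolding Ew_def by (simp add: upt_conv_Cons)

lemma Ew_split: "a \<le> b \<Longrightarrow> b \<le> c \<Longrightarrow> Ew S a c = Ew S a b @ Ew S b c"
proof -
  assume "a \<le> b" "b \<le> c"
  then have "[a..<c] = [a..<b] @ [b..<c]" using upt_add_eq_append[of a b "c - b"] by simp
  then show ?thesis unfolding Ew_def by simp
qed

lemma Ew_back: "a < b \<Longrightarrow> Ew S a b = Ew S a (b - 1) @ fr S (b - 1)"
  using Ew_split[of a "b-1" b S] Ew_front[of "b-1" b S] by simp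

lemma Ew_cong: "(\<And>i. a \<le> i \<Longrightarrow> i < b \<Longrightarrow> i \<in> S \<longleftrightarrow> i \<in> T) \<Longrightarrow> Ew S a b = Ew T a b"
  unfolding Ew_def by (intro arg_cong[where f=concat] map_cong) auto

lemma fr_comm: "1 \<le> j \<Longrightarrow> j \<le> n \<Longrightarrow> 1 \<le> a \<Longrightarrow> a \<le> n \<Longrightarrow> eps j @ fr S a \<approx> fr S a @ eps j"
  using eps_comm[of j a] by (auto intro: ev_refl)

lemma Ew_comm_k: "1 \<le> j \<Longrightarrow> j \<le> n \<Longrightarrow> 1 \<le> a \<Longrightarrow> a + k \<le> n + 1 \<Longrightarrow>
   eps j @ Ew S a (a + k) \<approx> Ew S a (a + k) @ eps j"
proof (induction k arbitrary: a)
  case 0 then show ?case by (auto intro: ev_refl)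
next
  case (Suc k)
  have e: "Ew S a (a + Suc k) = fr S a @ Ew S (Suc a) (Suc a + k)" by (simp add: Ew_front)
  have "eps j @ fr S a @ Ew S (Suc a) (Suc a + k) \<approx> fr S a @ eps j @ Ew S (Suc a) (Suc a + k)"
    by (rule ev_mid[OF fr_comm[of j a S], where p="[]" and q="Ew S (Suc a) (Suc a + k)"]) (use Suc.prems in simp_all)
  also have "\<dots> \<approx> fr S a @ Ew S (Suc a) (Suc a + k) @ eps j"
    by (rule ev_mid[OF Suc.IH[of "Suc a"], where p="fr S a" and q="[]"]) (use Suc.prems in simp_all)
  finally show ?case using e by simp
qed

lemma Ew_comm: "1 \<le> j \<Longrightarrow> j \<le> n \<Longrightarrow> 1 \<le> a \<Longrightarrow> a \<le> b \<Longrightarrow> b \<le> n + 1 \<Longrightarrow>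
   eps j @ Ew S a b \<approx> Ew S a b @ eps j"
  using Ew_comm_k[of j a "b - a" S] by simp

lemma Ew_ins_k: "1 \<le> a \<Longrightarrow> a \<le> i \<Longrightarrow> i < a + k \<Longrightarrow> a + k \<le> n + 1 \<Longrightarrow>
   eps i @ Ew S a (a + k) \<approx> Ew (insert i S) a (a + k)"
proof (induction k arbitrary: a)
  case 0 then show ?case by simp
next
  case (Suc k)
  have e: "\<And>T. Ew T a (a + Suc k) = fr T a @ Ew T (Suc a) (Suc a + k)" by (simp add: Ew_front)
  show ?case
  proof (cases "i = a")
    case True
    have c: "Ew (insert i S) (Suc a) (Suc a + k) = Ew S (Suc a) (Suc a + k)"
      by (rule Ew_cong) (use True in auto)
    show ?thesis
    proof (cases "a \<in> S")
      case True
      have "eps i @ fr S a @ Ew S (Suc a) (Suc a + k) \<approx> eps i @ Ew S (Suc a) (Suc a + k)"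
        by (rule ev_mid[OF eps_idem[of i], where p="[]" and q="Ew S (Suc a) (Suc a + k)"])
           (use Suc.prems True \<open>i = a\<close> in simp_all)
      then show ?thesis using e[of S] e[of "insert i S"] c True \<open>i = a\<close> by simp
    next
      case False
      have "eps i @ Ew S (Suc a) (Suc a + k) \<approx> eps i @ Ew S (Suc a) (Suc a + k)"
        by (rule ev_refl) (use Suc.prems in simp)
      then show ?thesis using e[of S] e[of "insert i S"] c False \<open>i = a\<close> by simp
    qed
  next
    case False
    have "eps i @ fr S a @ Ew S (Suc a) (Suc a + k) \<approx> fr S a @ eps i @ Ew S (Suc a) (Suc a + k)"
      by (rule ev_mid[OF fr_comm[of i a S], where p="[]" and q="Ew S (Suc a) (Suc a + k)"]) (use Suc.prems in simp_all)
    also have "\<dots> \<approx> fr S a @ Ew (insert i S) (Suc a) (Suc a + k)"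
      by (rule ev_mid[OF Suc.IH[of "Suc a"], where p="fr S a" and q="[]"]) (use Suc.prems False in simp_all)
    finally show ?thesis using e[of S] e[of "insert i S"] False by simp
  qed
qed

abbreviation "EW S \<equiv> Ew S 1 (n + 1)"

lemma EW_ins: "1 \<le> i \<Longrightarrow> i \<le> n \<Longrightarrow> eps i @ EW S \<approx> EW (insert i S)"
  using Ew_ins_k[of 1 i n S] by simp

lemma EW_ins_r: "1 \<le> i \<Longrightarrow> i \<le> n \<Longrightarrow> EW S @ eps i \<approx> EW (insert i S)"
  using ev_trans[OF ev_sym[OF Ew_comm[of i 1 "n+1" S]] EW_ins[of i S]] by simp

lemma EW_union_k: "1 \<le> a \<Longrightarrow> a + k \<le> n + 1 \<Longrightarrow>
   EW S @ Ew T a (a + k) \<approx> EW (S \<union> (T \<inter> {a..<a+k}))"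
proof (induction k arbitrary: a S)
  case 0
  have "EW S = EW (S \<union> (T \<inter> {a..<a + 0}))" by (rule Ew_cong) auto
  then show ?case by (auto intro: ev_refl)
next
  case (Suc k)
  have e: "Ew T a (a + Suc k) = fr T a @ Ew T (Suc a) (Suc a + k)" by (simp add: Ew_front)
  define S' where "S' = (if a \<in> T then insert a S else S)"
  have 1: "EW S @ fr T a \<approx> EW S'"
    using EW_ins_r[of a S] Suc.prems unfolding S'_def by (auto intro: ev_refl)
  have "EW S @ fr T a @ Ew T (Suc a) (Suc a + k) \<approx> EW S' @ Ew T (Suc a) (Suc a + k)"
    using ev_r[OF 1, of "Ew T (Suc a) (Suc a + k)"] Suc.prems by simp
  also have "\<dots> \<approx> EW (S' \<union> (T \<inter> {Suc a..<Suc a + k}))"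
    by (rule Suc.IH) (use Suc.prems in simp_all)
  also have "S' \<union> (T \<inter> {Suc a..<Suc a + k}) = S \<union> (T \<inter> {a..<a + Suc k})"
    unfolding S'_def using Suc_le_eq le_eq_less_or_eq by auto
  finally show ?case using e by simp
qed

lemma EW_union: "EW S @ EW T \<approx> EW (S \<union> T)"
proof -
  have "EW S @ EW T \<approx> EW (S \<union> (T \<inter> {1..<1+n}))" using EW_union_k[of 1 n S T] by simp
  also have "EW (S \<union> (T \<inter> {1..<1+n})) = EW (S \<union> T)" by (rule Ew_cong) auto
  finally show ?thesis .
qed

definition XS :: "nat set \<Rightarrow> nat set" where "XS S = {i. Suc i \<in> S \<and> i < n}"
definition YS :: "nat set \<Rightarrow> nat set" where "YS S = {i. 2 \<le> i \<and> i - 1 \<in> S}"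

lemma X_Ew_k: "2 \<le> a \<Longrightarrow> a + k \<le> n + 1 \<Longrightarrow>
   [X] @ Ew S a (a + k) \<approx> Ew (XS S) (a - 1) (a - 1 + k) @ [X]"
proof (induction k arbitrary: a)
  case 0 then show ?case by simp
next
  case (Suc k)
  have e1: "Ew S a (a + Suc k) = fr S a @ Ew S (Suc a) (Suc a + k)" by (simp add: Ew_front)
  have e2: "Ew (XS S) (a - 1) (a - 1 + Suc k) = fr (XS S) (a - 1) @ Ew (XS S) a (a + k)"
    using Ew_front[of "a - 1" "a - 1 + Suc k" "XS S"] Suc.prems by simp
  have f: "[X] @ fr S a \<approx> fr (XS S) (a - 1) @ [X]"
  proof (cases "a \<in> S")
    case True
    then have "a - 1 \<in> XS S" using Suc.prems by (simp add: XS_def)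
    then show ?thesis using xshift[of "a - 1"] Suc.prems True by simp
  next
    case False
    then have "a - 1 \<notin> XS S" using Suc.prems by (simp add: XS_def)
    then show ?thesis using False by simp
  qed
  have "[X] @ fr S a @ Ew S (Suc a) (Suc a + k) \<approx> fr (XS S) (a - 1) @ [X] @ Ew S (Suc a) (Suc a + k)"
    by (rule ev_mid[OF f, where p="[]" and q="Ew S (Suc a) (Suc a + k)"]) (use Suc.prems in simp_all)
  also have "\<dots> \<approx> fr (XS S) (a - 1) @ Ew (XS S) a (a + k) @ [X]"
    by (rule ev_mid[OF Suc.IH[of "Suc a"], where p="fr (XS S) (a - 1)" and q="[]"]) (use Suc.prems in simp_all)
  finally show ?case using e1 e2 by simp
qed

lemma X_EW: "[X] @ EW S \<approx> EW (XS S) @ [X]"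
proof -
  have e1: "EW S = fr S 1 @ Ew S 2 (2 + (n - 1))" using Ew_front[of 1 "n+1" S] n3
    by (simp add: numeral_2_eq_2)
  have e2: "EW (XS S) = Ew (XS S) 1 n"
    using Ew_back[of 1 "n+1" "XS S"] n3 by (simp add: XS_def)
  have f: "[X] @ fr S 1 \<approx> [X]" using x1 by simp
  have "[X] @ fr S 1 @ Ew S 2 (2 + (n - 1)) \<approx> [X] @ Ew S 2 (2 + (n - 1))"
    by (rule ev_mid[OF f, where p="[]" and q="Ew S 2 (2 + (n - 1))"]) (use n3 in simp_all)
  also have "\<dots> \<approx> Ew (XS S) (2 - 1) (2 - 1 + (n - 1)) @ [X]"
    by (rule X_Ew_k) (use n3 in simp_all)
  finally show ?thesis using e1 e2 n3 by simp
qed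

lemma Y_Ew_k: "1 \<le> a \<Longrightarrow> a + k \<le> n \<Longrightarrow>
   [Y] @ Ew S a (a + k) \<approx> Ew (YS S) (a + 1) (a + 1 + k) @ [Y]"
proof (induction k arbitrary: a)
  case 0 then show ?case by simp
next
  case (Suc k)
  have e1: "Ew S a (a + Suc k) = fr S a @ Ew S (Suc a) (Suc a + k)" by (simp add: Ew_front)
  have e2: "Ew (YS S) (a + 1) (a + 1 + Suc k) = fr (YS S) (a + 1) @ Ew (YS S) (Suc a + 1) (Suc a + 1 + k)"
    using Ew_front[of "a + 1" "a + 1 + Suc k" "YS S"] Suc.prems by simp
  have f: "[Y] @ fr S a \<approx> fr (YS S) (a + 1) @ [Y]"
  proof (cases "a \<in> S")
    case True
    then have "a + 1 \<in> YS S" using Suc.prems by (simp add: YS_def)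
    then show ?thesis using yshift[of a] Suc.prems True by simp
  next
    case False
    then have "a + 1 \<notin> YS S" using Suc.prems by (simp add: YS_def)
    then show ?thesis using False by simp
  qed
  have "[Y] @ fr S a @ Ew S (Suc a) (Suc a + k) \<approx> fr (YS S) (a + 1) @ [Y] @ Ew S (Suc a) (Suc a + k)"
    by (rule ev_mid[OF f, where p="[]" and q="Ew S (Suc a) (Suc a + k)"]) (use Suc.prems in simp_all)
  also have "\<dots> \<approx> fr (YS S) (a + 1) @ Ew (YS S) (Suc a + 1) (Suc a + 1 + k) @ [Y]"
    by (rule ev_mid[OF Suc.IH[of "Suc a"], where p="fr (YS S) (a + 1)" and q="[]"]) (use Suc.prems in simp_all)
  finally show ?case using e1 e2 by simp
qed

lemma Y_EW: "[Y] @ EW S \<approx> EW (YS S) @ [Y]"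
proof -
  have e1: "EW S = Ew S 1 (1 + (n - 1)) @ fr S n" using Ew_back[of 1 "n+1" S] n3 by simp
  have e2: "EW (YS S) = Ew (YS S) (1 + 1) (1 + 1 + (n - 1))"
    using Ew_front[of 1 "n+1" "YS S"] n3 by (simp add: YS_def)
  have f: "[Y] @ fr S n \<approx> [Y]" using yn by simp
  have "[Y] @ Ew S 1 (1 + (n - 1)) @ fr S n \<approx> Ew (YS S) (1 + 1) (1 + 1 + (n - 1)) @ [Y] @ fr S n"
    by (rule ev_mid[OF Y_Ew_k[of 1 "n - 1" S], where p="[]" and q="fr S n"]) (use n3 in simp_all)
  also have "\<dots> \<approx> Ew (YS S) (1 + 1) (1 + 1 + (n - 1)) @ [Y]"
    by (rule ev_mid[OF f, where p="Ew (YS S) (1 + 1) (1 + 1 + (n - 1))" and q="[]"]) (use n3 in simp_all)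
  finally show ?thesis using e1 e2 by simp
qed

abbreviation "Xp k \<equiv> replicate k X"
abbreviation "Yp k \<equiv> replicate k Y"

lemma Xp_eps: "1 \<le> i \<Longrightarrow> i + k \<le> n \<Longrightarrow> Xp k @ eps (i + k) \<approx> eps i @ Xp k"
proof (induction k arbitrary: i)
  case 0 then show ?case by simp
next
  case (Suc k)
  have "[X] @ Xp k @ eps (i + 1 + k) \<approx> [X] @ eps (i + 1) @ Xp k"
    by (rule ev_mid[OF Suc.IH[of "i+1"], where p="[X]" and q="[]"]) (use Suc.prems in simp_all)
  also have "\<dots> \<approx> eps i @ [X] @ Xp k"
    by (rule ev_mid[OF xshift[of i], where p="[]" and q="Xp k"]) (use Suc.prems in simp_all)
  finally show ?case by simp
qed

lemma Xp_kill: "1 \<le> j \<Longrightarrow> j \<le> n \<Longrightarrow> n < j + d \<Longrightarrow> Xp d \<approx> eps j @ Xp d"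
proof -
  assume h: "1 \<le> j" "j \<le> n" "n < j + d"
  define k where "k = n - j"
  define m where "m = d - k - 1"
  have d: "Xp d = Xp k @ [X] @ Xp m" using h unfolding k_def m_def
    by (simp flip: replicate_add replicate_Suc)
  have "Xp k @ [X] @ Xp m \<approx> Xp k @ eps n @ [X] @ Xp m"
    by (rule ev_mid[OF ev_sym[OF nx], where p="Xp k" and q="Xp m"]) (use n3 in simp_all)
  also have "\<dots> \<approx> eps j @ Xp k @ [X] @ Xp m"
    by (rule ev_mid[OF Xp_eps[of j k], where p="[]" and q="[X] @ Xp m"]) (use h in \<open>simp_all add: k_def\<close>)
  finally show ?thesis using d by simp
qed

lemma Yp_eps: "1 \<le> i \<Longrightarrow> i + k \<le> n \<Longrightarrow> Yp k @ eps i \<approx> eps (i + k) @ Yp k"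
proof (induction k arbitrary: i)
  case 0 then show ?case by simp
next
  case (Suc k)
  have "[Y] @ Yp k @ eps i \<approx> [Y] @ eps (i + k) @ Yp k"
    by (rule ev_mid[OF Suc.IH[of i], where p="[Y]" and q="[]"]) (use Suc.prems in simp_all)
  also have "\<dots> \<approx> eps (i + k + 1) @ [Y] @ Yp k"
    by (rule ev_mid[OF yshift[of "i + k"], where p="[]" and q="Yp k"]) (use Suc.prems in simp_all)
  finally show ?case by simp
qed

lemma Yp_kill: "1 \<le> j \<Longrightarrow> j \<le> n \<Longrightarrow> j \<le> d \<Longrightarrow> Yp d \<approx> eps j @ Yp d"
proof -
  assume h: "1 \<le> j" "j \<le> n" "j \<le> d"
  define k where "k = j - 1"
  define m where "m = d - j"
  have d: "Yp d = Yp k @ [Y] @ Yp m" using h unfolding k_def m_def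
    by (simp flip: replicate_add replicate_Suc)
  have "Yp k @ [Y] @ Yp m \<approx> Yp k @ eps 1 @ [Y] @ Yp m"
    by (rule ev_mid[OF ev_sym[OF oney], where p="Yp k" and q="Yp m"]) (use n3 in simp_all)
  also have "\<dots> \<approx> eps (1 + k) @ Yp k @ [Y] @ Yp m"
    by (rule ev_mid[OF Yp_eps[of 1 k], where p="[]" and q="[Y] @ Yp m"]) (use h in \<open>simp_all add: k_def\<close>)
  finally show ?thesis using d h by (simp add: k_def)
qed

lemma Ew_killX_k: "1 \<le> a \<Longrightarrow> a + k \<le> n + 1 \<Longrightarrow> (\<And>j. j \<in> T \<Longrightarrow> n < j + d) \<Longrightarrow>
   Ew T a (a + k) @ Xp d \<approx> Xp d"
proof (induction k arbitrary: a)
  case 0 then show ?case by simp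
next
  case (Suc k)
  have e1: "Ew T a (a + Suc k) = fr T a @ Ew T (Suc a) (Suc a + k)" by (simp add: Ew_front)
  have "fr T a @ Ew T (Suc a) (Suc a + k) @ Xp d \<approx> fr T a @ Xp d"
    by (rule ev_mid[OF Suc.IH[of "Suc a"], where p="fr T a" and q="[]"]) (use Suc.prems in simp_all)
  also have "fr T a @ Xp d \<approx> Xp d"
  proof (cases "a \<in> T")
    case True then show ?thesis using ev_sym[OF Xp_kill[of a d]] Suc.prems by simp
  qed simp
  finally show ?case using e1 by simp
qed

lemma Ew_killY_k: "1 \<le> a \<Longrightarrow> a + k \<le> n + 1 \<Longrightarrow> (\<And>j. j \<in> T \<Longrightarrow> j \<le> d) \<Longrightarrow>
   Ew T a (a + k) @ Yp d \<approx> Yp d"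
proof (induction k arbitrary: a)
  case 0 then show ?case by simp
next
  case (Suc k)
  have e1: "Ew T a (a + Suc k) = fr T a @ Ew T (Suc a) (Suc a + k)" by (simp add: Ew_front)
  have "fr T a @ Ew T (Suc a) (Suc a + k) @ Yp d \<approx> fr T a @ Yp d"
    by (rule ev_mid[OF Suc.IH[of "Suc a"], where p="fr T a" and q="[]"]) (use Suc.prems in simp_all)
  also have "fr T a @ Yp d \<approx> Yp d"
  proof (cases "a \<in> T")
    case True then show ?thesis using ev_sym[OF Yp_kill[of a d]] Suc.prems by simp
  qed simp
  finally show ?case using e1 by simp
qed

lemma canonX: "EW S @ Xp d \<approx> EW (S \<union> {j. n < j + d}) @ Xp d"
proof -
  have "EW S @ Xp d \<approx> EW S @ EW {j. n < j + d} @ Xp d"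
    by (rule ev_mid[OF ev_sym[OF Ew_killX_k[of 1 n]], where p="EW S" and q="[]"]) auto
  also have "\<dots> \<approx> EW (S \<union> {j. n < j + d}) @ Xp d"
    by (rule ev_mid[OF EW_union, where p="[]" and q="Xp d"]) simp_all
  finally show ?thesis .
qed

lemma canonY: "EW S @ Yp d \<approx> EW (S \<union> {j. j \<le> d}) @ Yp d"
proof -
  have "EW S @ Yp d \<approx> EW S @ EW {j. j \<le> d} @ Yp d"
    by (rule ev_mid[OF ev_sym[OF Ew_killY_k[of 1 n]], where p="EW S" and q="[]"]) auto
  also have "\<dots> \<approx> EW (S \<union> {j. j \<le> d}) @ Yp d"
    by (rule ev_mid[OF EW_union, where p="[]" and q="Yp d"]) simp_all
  finally show ?thesis .
qed

lemma Ew_mid: "Ew UNIV 2 n = map E [2..<n]"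
proof -
  have "Ew UNIV 2 n = concat (map (\<lambda>i. [E i]) [2..<n])"
    unfolding Ew_def by (intro arg_cong[where f=concat] map_cong) (auto simp: eps_def)
  also have "\<dots> = map E [2..<n]" by (induction n) auto
  finally show ?thesis .
qed

lemma EW_full: "EW UNIV = [Y, X] @ map E [2..<n] @ [X, Y]"
proof -
  have a: "EW UNIV = fr UNIV 1 @ Ew UNIV 2 n @ fr UNIV n"
    using Ew_front[of 1 "n+1" UNIV] Ew_back[of 2 "n+1" UNIV] n3 by (simp add: numeral_2_eq_2)
  show ?thesis using a Ew_mid n3 by (simp add: eps_def)
qed

lemma Zx: "EW UNIV @ [X] \<approx> EW UNIV"
proof -
  have "EW UNIV \<approx> [X] @ Ew UNIV 2 (2 + (n - 2)) @ [X, Y]"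
  proof -
    have "2 + (n - 2) = n" using n3 by simp
    then show ?thesis using V8 EW_full Ew_mid by simp
  qed
  also have "\<dots> \<approx> Ew (XS UNIV) (2 - 1) (2 - 1 + (n - 2)) @ [X] @ [X, Y]"
    by (rule ev_mid[OF X_Ew_k[of 2 "n - 2" UNIV], where p="[]" and q="[X, Y]"]) (use n3 in simp_all)
  also have "\<dots> \<approx> Ew (XS UNIV) (2 - 1) (2 - 1 + (n - 2)) @ [E (n - 1), X]"
    by (rule ev_mid[OF V7a, where p="Ew (XS UNIV) (2 - 1) (2 - 1 + (n - 2))" and q="[]"]) (use n3 in simp_all)
  also have "\<dots> \<approx> Ew (XS UNIV) (2 - 1) (2 - 1 + (n - 2)) @ [E (n - 1)] @ eps n @ [X]"
    by (rule ev_mid[OF ev_sym[OF nx], where p="Ew (XS UNIV) (2 - 1) (2 - 1 + (n - 2)) @ [E (n - 1)]" and q="[]"])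
       (use n3 in simp_all)
  also have eq: "Ew (XS UNIV) (2 - 1) (2 - 1 + (n - 2)) @ [E (n - 1)] @ eps n @ [X] = EW UNIV @ [X]"
  proof -
    have c: "Ew (XS UNIV) (2 - 1) (2 - 1 + (n - 2)) = Ew UNIV 1 (n - 1)"
    proof -
      have "2 - 1 + (n - 2) = n - 1" using n3 by simp
      then show ?thesis by (auto intro!: Ew_cong simp: XS_def)
    qed
    have "EW UNIV = Ew UNIV 1 (n - 1) @ fr UNIV (n - 1) @ fr UNIV n"
      using Ew_back[of 1 "n+1" UNIV] Ew_back[of 1 n UNIV] n3 by simp
    moreover have "n - Suc 0 \<noteq> Suc 0" "n - Suc 0 \<noteq> n" using n3 by auto
    ultimately have "Ew (XS UNIV) (2 - 1) (2 - 1 + (n - 2)) @ [E (n - 1)] @ eps n = EW UNIV"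
      using c n3 by (simp add: eps_def)
    then show ?thesis by (metis append.assoc)
  qed
  finally show ?thesis by (rule ev_sym)
qed

lemma Zy: "EW UNIV @ [Y] \<approx> EW UNIV"
proof -
  have "EW UNIV @ [Y] \<approx> EW UNIV @ [X] @ [Y]"
    by (rule ev_mid[OF ev_sym[OF Zx], where p="[]" and q="[Y]"]) simp_all
  also have "\<dots> = EW UNIV @ eps n" using n3 by (simp add: eps_def)
  also have "\<dots> \<approx> EW (insert n UNIV)" by (rule EW_ins_r) (use n3 in simp_all)
  finally show ?thesis by simp
qed

lemma ZXp: "EW UNIV @ Xp d \<approx> EW UNIV"
proof (induction d)
  case 0 then show ?case by simp
next
  case (Suc d)
  have "EW UNIV @ [X] @ Xp d \<approx> EW UNIV @ Xp d"
    by (rule ev_mid[OF Zx, where p="[]" and q="Xp d"]) simp_all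
  then show ?case using Suc ev_trans by simp
qed

lemma ZYp: "EW UNIV @ Yp d \<approx> EW UNIV"
proof (induction d)
  case 0 then show ?case by simp
next
  case (Suc d)
  have "EW UNIV @ [Y] @ Yp d \<approx> EW UNIV @ Yp d"
    by (rule ev_mid[OF Zy, where p="[]" and q="Yp d"]) simp_all
  then show ?case using Suc ev_trans by simp
qed

definition pw :: "int \<Rightarrow> gen list" where
  "pw d = (if 0 \<le> d then Xp (nat d) else Yp (nat (-d)))"

lemma pw_in[simp]: "pw d \<in> lists (Dgens n)" unfolding pw_def by auto

lemma pw_posX: "0 \<le> d \<Longrightarrow> pw (d + 1) = [X] @ pw d"
  unfolding pw_def by (simp add: nat_add_distrib)
lemma pw_negX: "d < 0 \<Longrightarrow> pw d = [Y] @ pw (d + 1)"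
proof -
  assume "d < 0"
  then have "nat (- d) = Suc (nat (- (d + 1)))" by simp
  then show ?thesis using \<open>d < 0\<close> unfolding pw_def by auto
qed
lemma pw_negY: "d \<le> 0 \<Longrightarrow> pw (d - 1) = [Y] @ pw d"
proof -
  assume "d \<le> 0"
  then have "nat (- (d - 1)) = Suc (nat (- d))" by simp
  then show ?thesis using \<open>d \<le> 0\<close> unfolding pw_def by auto
qed
lemma pw_posY: "0 < d \<Longrightarrow> pw d = [X] @ pw (d - 1)"
proof -
  assume "0 < d"
  then have "nat d = Suc (nat (d - 1))" by simp
  then show ?thesis using \<open>0 < d\<close> unfolding pw_def by auto
qed

definition wd :: "nat set \<times> int \<Rightarrow> gen list" where
  "wd st = EW (fst st) @ pw (snd st)"

lemma wd_in[simp]: "wd st \<in> lists (Dgens n)" unfolding wd_def by simp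

fun act :: "gen \<Rightarrow> nat set \<times> int \<Rightarrow> nat set \<times> int" where
  "act (E i) (S, d) = (insert i S, d)"
| "act X (S, d) = (if 0 \<le> d then (XS S, d + 1) else (insert n (XS S), d + 1))"
| "act Y (S, d) = (if d \<le> 0 then (YS S, d - 1) else (insert 1 (YS S), d - 1))"

lemma step: "g \<in> Dgens n \<Longrightarrow> [g] @ wd (S, d) \<approx> wd (act g (S, d))"
proof -
  assume g: "g \<in> Dgens n"
  show ?thesis
  proof (cases g)
    case (E i)
    then have i: "2 \<le> i" "i \<le> n - 1" using g by (auto simp: Dgens_def)
    then have "[E i] = eps i" by (auto simp: eps_def)
    moreover have "eps i @ EW S @ pw d \<approx> EW (insert i S) @ pw d"
      by (rule ev_mid[OF EW_ins[of i S], where p="[]" and q="pw d"]) (use i in simp_all)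
    ultimately show ?thesis using E by (simp add: wd_def)
  next
    case X
    show ?thesis
    proof (cases "0 \<le> d")
      case True
      have "[X] @ EW S @ pw d \<approx> EW (XS S) @ [X] @ pw d"
        by (rule ev_mid[OF X_EW, where p="[]" and q="pw d"]) simp_all
      then show ?thesis using X True pw_posX[of d] by (simp add: wd_def)
    next
      case False
      have "[X] @ EW S @ [Y] @ pw (d + 1) \<approx> EW (XS S) @ [X] @ [Y] @ pw (d + 1)"
        by (rule ev_mid[OF X_EW, where p="[]" and q="[Y] @ pw (d + 1)"]) simp_all
      also have "\<dots> = EW (XS S) @ eps n @ pw (d + 1)" using n3 by (simp add: eps_def)
      also have "\<dots> \<approx> EW (insert n (XS S)) @ pw (d + 1)"
        by (rule ev_mid[OF EW_ins_r, where p="[]" and q="pw (d + 1)"]) (use n3 in simp_all)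
      finally show ?thesis using X False pw_negX[of d] by (simp add: wd_def)
    qed
  next
    case Y
    show ?thesis
    proof (cases "d \<le> 0")
      case True
      have "[Y] @ EW S @ pw d \<approx> EW (YS S) @ [Y] @ pw d"
        by (rule ev_mid[OF Y_EW, where p="[]" and q="pw d"]) simp_all
      then show ?thesis using Y True pw_negY[of d] by (simp add: wd_def)
    next
      case False
      have "[Y] @ EW S @ [X] @ pw (d - 1) \<approx> EW (YS S) @ [Y] @ [X] @ pw (d - 1)"
        by (rule ev_mid[OF Y_EW, where p="[]" and q="[X] @ pw (d - 1)"]) simp_all
      also have "\<dots> = EW (YS S) @ eps 1 @ pw (d - 1)" by (simp add: eps_def)
      also have "\<dots> \<approx> EW (insert 1 (YS S)) @ pw (d - 1)"
        by (rule ev_mid[OF EW_ins_r, where p="[]" and q="pw (d - 1)"]) (use n3 in simp_all)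
      finally show ?thesis using Y False pw_posY[of d] by (simp add: wd_def)
    qed
  qed
qed

definition st :: "gen list \<Rightarrow> nat set \<times> int" where
  "st w = foldr act w ({}, 0)"

lemma EW_empty: "Ew {} a b = []" unfolding Ew_def by (induction b) auto

lemma norm: "w \<in> lists (Dgens n) \<Longrightarrow> w \<approx> wd (st w)"
proof (induction w)
  case Nil then show ?case by (simp add: st_def wd_def pw_def EW_empty)
next
  case (Cons a w)
  obtain S d where sd: "st w = (S, d)" by fastforce
  have "[a] @ w \<approx> [a] @ wd (S, d)"
    by (rule ev_mid[OF Cons.IH[unfolded sd], where p="[a]" and q="[]"]) (use Cons.prems in simp_all)
  also have "\<dots> \<approx> wd (act a (S, d))" by (rule step) (use Cons.prems in simp)
  also have "act a (S, d) = st (a # w)" using sd by (simp add: st_def)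
  finally show ?case by simp
qed

definition dm :: "nat set \<Rightarrow> int \<Rightarrow> nat set" where
  "dm S d = {i. 1 \<le> i \<and> i \<le> n \<and> i \<notin> S \<and> 1 \<le> int i + d \<and> int i + d \<le> int n}"

lemma canon: "wd (S, d) \<approx> (if dm S d = {} then EW UNIV else wd (UNIV - dm S d, d))"
proof (cases "0 \<le> d")
  case True
  define k where "k = nat d"
  have w: "wd (S, d) = EW S @ Xp k" using True by (simp add: wd_def pw_def k_def)
  have c: "wd (S, d) \<approx> EW (S \<union> {j. n < j + k}) @ Xp k" using w canonX by simp
  show ?thesis
  proof (cases "dm S d = {}")
    case True
    have "EW (S \<union> {j. n < j + k}) = EW UNIV"
    proof (rule Ew_cong)
      fix i assume "1 \<le> i" "i < n + 1"
      then show "i \<in> S \<union> {j. n < j + k} \<longleftrightarrow> i \<in> UNIV"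
      proof -
        have "i \<notin> dm S d" using True by auto
        then show ?thesis using \<open>1 \<le> i\<close> \<open>i < n + 1\<close> \<open>0 \<le> d\<close> unfolding dm_def k_def
          by (cases "i \<in> S") auto
      qed
    qed
    then show ?thesis using True c ev_trans[OF c] ZXp[of k] by simp
  next
    case False
    have "EW (S \<union> {j. n < j + k}) = EW (UNIV - dm S d)"
    proof (rule Ew_cong)
      fix i assume "1 \<le> i" "i < n + 1"
      then show "i \<in> S \<union> {j. n < j + k} \<longleftrightarrow> i \<in> UNIV - dm S d"
        using \<open>0 \<le> d\<close> unfolding dm_def k_def by auto
    qed
    then show ?thesis using False c True by (simp add: wd_def pw_def k_def)
  qed
next
  case False
  define k where "k = nat (- d)"
  have w: "wd (S, d) = EW S @ Yp k" using False by (simp add: wd_def pw_def k_def)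
  have c: "wd (S, d) \<approx> EW (S \<union> {j. j \<le> k}) @ Yp k" using w canonY by simp
  show ?thesis
  proof (cases "dm S d = {}")
    case True
    have "EW (S \<union> {j. j \<le> k}) = EW UNIV"
    proof (rule Ew_cong)
      fix i assume "1 \<le> i" "i < n + 1"
      then show "i \<in> S \<union> {j. j \<le> k} \<longleftrightarrow> i \<in> UNIV"
      proof -
        have "i \<notin> dm S d" using True by auto
        then show ?thesis using \<open>1 \<le> i\<close> \<open>i < n + 1\<close> \<open>\<not> 0 \<le> d\<close> unfolding dm_def k_def
          by (cases "i \<in> S") auto
      qed
    qed
    then show ?thesis using True c ev_trans[OF c] ZYp[of k] by simp
  next
    case False
    have "EW (S \<union> {j. j \<le> k}) = EW (UNIV - dm S d)"
    proof (rule Ew_cong)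
      fix i assume "1 \<le> i" "i < n + 1"
      then show "i \<in> S \<union> {j. j \<le> k} \<longleftrightarrow> i \<in> UNIV - dm S d"
        using \<open>\<not> 0 \<le> d\<close> unfolding dm_def k_def by auto
    qed
    then show ?thesis using False c \<open>\<not> 0 \<le> d\<close> by (simp add: wd_def pw_def k_def)
  qed
qed

definition ev :: "gen list \<Rightarrow> pmap" where
  "ev w = word_eval pcomp (pid n) (gen_map n) w"

definition tr :: "nat set \<Rightarrow> int \<Rightarrow> pmap" where
  "tr A d = (\<lambda>i. if i \<in> A then Some (nat (int i + d)) else None)"

lemma ev_Nil: "ev [] = pid n" by (simp add: word_eval_def ev_def)
lemma ev_Cons: "ev (a # w) = pcomp (gen_map n a) (ev w)" by (simp add: word_eval_def ev_def)

lemma pcomp_assoc: "pcomp (pcomp a b) c = pcomp a (pcomp b c)"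
  by (auto simp: pcomp_def fun_eq_iff split: option.split)

lemma ev_range: "ev w i \<noteq> None \<Longrightarrow> 1 \<le> i \<and> i \<le> n"
  by (cases w) (auto simp: ev_Nil ev_Cons pid_def pcomp_def gen_map_def split: option.splits gen.splits if_splits)

lemma ev_append: "ev (u @ v) = pcomp (ev u) (ev v)"
proof (induction u)
  case Nil
  show ?case
  proof
    fix i
    show "ev ([] @ v) i = pcomp (ev []) (ev v) i"
      using ev_range[of v i] unfolding ev_Nil by (cases "ev v i") (auto simp: pcomp_def pid_def)
  qed
next
  case (Cons a u)
  then show ?case by (simp add: ev_Cons pcomp_assoc)
qed

lemma tr_comp: "(\<And>i. i \<in> A \<Longrightarrow> 0 \<le> int i + d) \<Longrightarrow>
   pcomp (tr A d) (tr B e) = tr {i \<in> A. nat (int i + d) \<in> B} (d + e)"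
  by (auto simp: pcomp_def tr_def fun_eq_iff add.assoc)

lemma pid_tr: "pid n = tr {1..n} 0" by (auto simp: pid_def tr_def fun_eq_iff)
lemma genX_tr: "gen_map n X = tr {1..n-1} 1" by (auto simp: gen_map_def tr_def fun_eq_iff)
lemma genY_tr: "gen_map n Y = tr {2..n} (-1)" by (auto simp: gen_map_def tr_def fun_eq_iff nat_diff_distrib)
lemma genE_tr: "gen_map n (E k) = tr ({1..n} - {k}) 0" by (auto simp: gen_map_def tr_def fun_eq_iff)

lemma tr_cong: "A = B \<Longrightarrow> d = e \<Longrightarrow> tr A d = tr B e" by simp
lemma tr_eqI: "A = B \<Longrightarrow> (A \<noteq> {} \<Longrightarrow> d = e) \<Longrightarrow> tr A d = tr B e"
  by (cases "A = {}") (auto simp: tr_def)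

lemma cX: "pcomp (gen_map n X) (tr B e) = tr {i. 1 \<le> i \<and> i \<le> n - 1 \<and> i + 1 \<in> B} (e + 1)"
  by (auto simp: pcomp_def tr_def gen_map_def fun_eq_iff)
lemma cY: "pcomp (gen_map n Y) (tr B e) = tr {i. 2 \<le> i \<and> i \<le> n \<and> i - 1 \<in> B} (e - 1)"
  by (auto simp: pcomp_def tr_def gen_map_def fun_eq_iff of_nat_diff algebra_simps)
lemma cE: "pcomp (gen_map n (E k)) (tr B e) = tr {i. 1 \<le> i \<and> i \<le> n \<and> i \<noteq> k \<and> i \<in> B} e"
  by (auto simp: pcomp_def tr_def gen_map_def fun_eq_iff)
lemma c0: "pcomp (tr A 0) (tr B e) = tr (A \<inter> B) e"
  by (auto simp: pcomp_def tr_def fun_eq_iff)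

lemma ev_eps: "1 \<le> i \<Longrightarrow> i \<le> n \<Longrightarrow> ev (eps i) = tr ({1..n} - {i}) 0"
proof -
  assume h: "1 \<le> i" "i \<le> n"
  consider "i = 1" | "i = n" | "i \<noteq> 1 \<and> i \<noteq> n" by blast
  then show ?thesis
  proof cases
    case 1
    then show ?thesis using n3
      by (auto simp: eps_def ev_Cons ev_Nil pid_tr cX cY intro!: tr_cong)
  next
    case 2
    then show ?thesis using n3
      by (auto simp: eps_def ev_Cons ev_Nil pid_tr cX cY intro!: tr_cong)
  next
    case 3
    then show ?thesis using n3
      by (auto simp: eps_def ev_Cons ev_Nil pid_tr cE intro!: tr_cong)
  qed
qed

lemma ev_Ew_k: "1 \<le> a \<Longrightarrow> a + k \<le> n + 1 \<Longrightarrow> ev (Ew S a (a + k)) = tr ({1..n} - (S \<inter> {a..<a+k})) 0"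
proof (induction k arbitrary: a)
  case 0 then show ?case by (simp add: ev_Nil pid_tr)
next
  case (Suc k)
  have e1: "Ew S a (a + Suc k) = fr S a @ Ew S (Suc a) (Suc a + k)" by (simp add: Ew_front)
  have f: "ev (fr S a) = tr ({1..n} - (S \<inter> {a})) 0" using Suc.prems
    by (auto simp: ev_eps ev_Nil pid_tr intro!: tr_cong)
  have ih: "ev (Ew S (Suc a) (Suc a + k)) = tr ({1..n} - (S \<inter> {Suc a..<Suc a + k})) 0"
    by (rule Suc.IH) (use Suc.prems in simp_all)
  show ?case unfolding e1 ev_append f ih c0
    using Suc.prems by (auto intro!: tr_cong)
qed

lemma ev_EW: "ev (EW S) = tr ({1..n} - S) 0"
  using ev_Ew_k[of 1 n S] by (auto intro!: tr_cong)

lemma ev_Xp: "ev (Xp k) = tr {i. 1 \<le> i \<and> i + k \<le> n} (int k)"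
proof (induction k)
  case 0 then show ?case by (auto simp: ev_Nil pid_tr intro!: tr_cong)
next
  case (Suc k)
  show ?case by (simp add: ev_Cons Suc cX) (auto intro!: tr_cong)
qed

lemma ev_Yp: "ev (Yp k) = tr {i. k + 1 \<le> i \<and> i \<le> n} (- int k)"
proof (induction k)
  case 0 then show ?case by (auto simp: ev_Nil pid_tr intro!: tr_cong)
next
  case (Suc k)
  show ?case by (simp add: ev_Cons Suc cY) (auto intro!: tr_cong)
qed

lemma ev_pw: "ev (pw d) = tr {i. 1 \<le> i \<and> i \<le> n \<and> 1 \<le> int i + d \<and> int i + d \<le> int n} d"
  unfolding pw_def by (auto simp: ev_Xp ev_Yp intro!: tr_cong)

lemma ev_wd: "ev (wd (S, d)) = tr (dm S d) d"
  unfolding wd_def fst_conv snd_conv ev_append ev_EW ev_pw c0 by (auto simp: dm_def intro!: tr_cong)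

lemma ev_tr_simps: "ev (a # w) = pcomp (gen_map n a) (ev w)" "ev [] = tr {1..n} 0"
  by (simp_all add: ev_Cons ev_Nil pid_tr)

lemma sound_V8: "ev ([Y, X] @ map E [2..<n] @ [X, Y]) = ev ([X] @ map E [2..<n] @ [X, Y])"
proof -
  have m: "ev (map E [2..<n]) = tr ({1..n} - {2..<n}) 0"
  proof -
    have "2 + (n - 2) = n" using n3 by simp
    then show ?thesis using ev_Ew_k[of 2 "n - 2" UNIV] n3 Ew_mid by simp
  qed
  show ?thesis
    by (simp only: append_Cons append_Nil ev_Cons ev_append m) (simp add: ev_tr_simps cX cY c0, auto intro!: tr_eqI)
qed

lemma ins_sub: "x \<in> B \<Longrightarrow> A \<subseteq> B \<Longrightarrow> insert x A \<subseteq> B" by blast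

lemma sound_V_sub: "Vrels n \<subseteq> {(u, v). ev u = ev v}"
  unfolding Vrels_def
  apply (intro Un_least ins_sub empty_subsetI)
  subgoal by (clarsimp simp: ev_tr_simps cX cY cE) (auto intro!: tr_cong)
  subgoal by (clarsimp simp: ev_tr_simps cX cY cE) (auto intro!: tr_cong)
  subgoal by (clarsimp simp: ev_tr_simps cX cY cE) (auto intro!: tr_cong)
  subgoal by (clarsimp simp: ev_tr_simps cX cY cE) (auto intro!: tr_eqI)
  subgoal by (clarsimp simp: ev_tr_simps cX cY cE) (auto intro!: tr_eqI)
  subgoal by (clarsimp simp: ev_tr_simps cX cY cE) (auto intro!: tr_eqI)
  subgoal by (clarsimp simp: ev_tr_simps cX cY cE) (auto intro!: tr_eqI)
  subgoal by (clarsimp simp: ev_tr_simps cX cY cE) (auto intro!: tr_eqI)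
  subgoal by (clarsimp simp: ev_tr_simps cX cY cE) (auto intro!: tr_eqI)
  subgoal by (clarsimp simp: ev_tr_simps cX cY cE) (auto intro!: tr_eqI)
  subgoal using sound_V8 by simp
  done

lemma sound: "u \<approx> v \<Longrightarrow> ev u = ev v"
  unfolding eqv_def
proof (induction rule: gen_cong.induct)
  case (base u v) then show ?case using sound_V_sub by blast
next
  case (ctxt u v a b) then show ?case by (simp add: ev_append)
qed auto

lemma dm_bounds: "i \<in> dm S d \<Longrightarrow> 1 \<le> i \<and> i \<le> n \<and> 1 \<le> int i + d \<and> int i + d \<le> int n"
  by (auto simp: dm_def)

lemma dm_eq: "tr (dm S d) d = tr (dm S' d') d' \<Longrightarrow> dm S d = dm S' d' \<and> (dm S d \<noteq> {} \<longrightarrow> d = d')"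
proof -
  assume h: "tr (dm S d) d = tr (dm S' d') d'"
  have dom: "dm S d = dm S' d'"
  proof
    show "dm S d \<subseteq> dm S' d'" using h by (auto simp: tr_def fun_eq_iff split: if_splits)
    show "dm S' d' \<subseteq> dm S d" using h by (auto simp: tr_def fun_eq_iff split: if_splits)
  qed
  moreover have "dm S d \<noteq> {} \<longrightarrow> d = d'"
  proof
    assume "dm S d \<noteq> {}"
    then obtain i where i: "i \<in> dm S d" by blast
    then have i': "i \<in> dm S' d'" using dom by simp
    have "nat (int i + d) = nat (int i + d')" using fun_cong[OF h, of i] i i' by (simp add: tr_def)
    then show "d = d'" using dm_bounds[OF i] dm_bounds[OF i'] by (simp add: eq_nat_nat_iff)
  qed
  ultimately show ?thesis by blast
qed

lemma complete: "u \<in> lists (Dgens n) \<Longrightarrow> v \<in> lists (Dgens n) \<Longrightarrow> ev u = ev v \<Longrightarrow> u \<approx> v"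
proof -
  assume u: "u \<in> lists (Dgens n)" and v: "v \<in> lists (Dgens n)" and e: "ev u = ev v"
  obtain S d where sd: "st u = (S, d)" by fastforce
  obtain S' d' where sd': "st v = (S', d')" by fastforce
  have nu: "u \<approx> wd (S, d)" using norm[OF u] sd by simp
  have nv: "v \<approx> wd (S', d')" using norm[OF v] sd' by simp
  have "tr (dm S d) d = tr (dm S' d') d'"
    using sound[OF nu] sound[OF nv] e by (simp add: ev_wd)
  from dm_eq[OF this] have eqs: "dm S d = dm S' d'" "dm S d \<noteq> {} \<Longrightarrow> d = d'" by auto
  have "(if dm S d = {} then EW UNIV else wd (UNIV - dm S d, d)) =
        (if dm S' d' = {} then EW UNIV else wd (UNIV - dm S' d', d'))"
  proof (cases "dm S d = {}")
    case True then show ?thesis using eqs(1) by simp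
  next
    case False
    then have "d = d'" using eqs(2) by blast
    have L: "dm S d \<noteq> {}" "dm S' d' \<noteq> {}" using False eqs(1) by auto
    have "wd (UNIV - dm S d, d) = wd (UNIV - dm S' d', d')" using eqs(1) \<open>d = d'\<close> by simp
    then show ?thesis using L by (simp only: if_False)
  qed
  then have W: "wd (S, d) \<approx> wd (S', d')"
    using ev_trans[OF canon[of S d]] ev_sym[OF canon[of S' d']] by simp
  show ?thesis using ev_trans[OF ev_trans[OF nu W] ev_sym[OF nv]] by simp
qed

lemma gpow_eq: "1 \<le> i \<Longrightarrow> i \<le> n \<Longrightarrow> k < n \<Longrightarrow> gpow n k i = (if i + k \<le> n then i + k else i + k - n)"
proof -
  assume h: "1 \<le> i" "i \<le> n" "k < n"
  show ?thesis
  proof (cases "i + k \<le> n")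
    case True
    then have "i - 1 + k < n" using h by simp
    then show ?thesis using True h by (simp add: gpow_def)
  next
    case False
    then have "n \<le> i - 1 + k" "i - 1 + k - n < n" using h by auto
    then have "(i - 1 + k) mod n = i - 1 + k - n" by (simp add: le_mod_geq)
    then show ?thesis using False h by (simp add: gpow_def)
  qed
qed

lemma dom_tr: "dom (tr A d) = A" by (auto simp: tr_def split: if_splits)

lemma tr_OCI: "A \<subseteq> {1..n} \<Longrightarrow> (\<And>i. i \<in> A \<Longrightarrow> 1 \<le> int i + d \<and> int i + d \<le> int n) \<Longrightarrow> tr A d \<in> OCI n"
proof -
  assume A: "A \<subseteq> {1..n}" and r: "\<And>i. i \<in> A \<Longrightarrow> 1 \<le> int i + d \<and> int i + d \<le> int n"
  have si: "tr A d \<in> sym_inv n"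
    unfolding sym_inv_def
  proof (intro CollectI conjI)
    show "dom (tr A d) \<subseteq> {1..n}" using A by (simp add: dom_tr)
    show "ran (tr A d) \<subseteq> {1..n}"
    proof
      fix y assume "y \<in> ran (tr A d)"
      then obtain i where "tr A d i = Some y" by (auto simp: ran_def)
      then have "i \<in> A" "y = nat (int i + d)" by (auto simp: tr_def split: if_splits)
      then show "y \<in> {1..n}" using r[of i] by auto
    qed
    show "inj_on (tr A d) (dom (tr A d))"
    proof (unfold dom_tr, rule inj_onI)
      fix i j assume "i \<in> A" "j \<in> A" "tr A d i = tr A d j"
      then have "nat (int i + d) = nat (int j + d)" by (simp add: tr_def)
      then show "i = j" using r[OF \<open>i \<in> A\<close>] r[OF \<open>j \<in> A\<close>] by (simp add: eq_nat_nat_iff)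
    qed
  qed
  have ci: "\<exists>k<n. \<forall>i\<in>dom (tr A d). tr A d i = Some (gpow n k i)"
  proof (cases "A = {}")
    case True then show ?thesis using n3 by (auto simp: dom_tr intro!: exI[of _ 0])
  next
    case False
    then obtain a where a: "a \<in> A" by blast
    have ab: "1 \<le> a" "a \<le> n" using a A by auto
    show ?thesis
    proof (cases "0 \<le> d")
      case True
      have dn: "d < int n" using r[OF a] ab by simp
      show ?thesis
      proof (intro exI[of _ "nat d"] conjI ballI)
        show "nat d < n" using dn True by (simp add: nat_less_iff)
        fix i assume "i \<in> dom (tr A d)"
        then have i: "i \<in> A" by (simp add: dom_tr)
        then have "1 \<le> i" "i \<le> n" using A by auto
        moreover have "i + nat d \<le> n" using r[OF i] True by linarith
        ultimately show "tr A d i = Some (gpow n (nat d) i)"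
          using i dn True by (simp add: gpow_eq tr_def nat_add_distrib)
      qed
    next
      case False
      have dn: "- int n < d" using r[OF a] ab by simp
      show ?thesis
      proof (intro exI[of _ "nat (int n + d)"] conjI ballI)
        show "nat (int n + d) < n" using False dn by (simp add: nat_less_iff)
        fix i assume "i \<in> dom (tr A d)"
        then have i: "i \<in> A" by (simp add: dom_tr)
        then have "1 \<le> i" "i \<le> n" using A by auto
        moreover have "\<not> i + nat (int n + d) \<le> n" using r[OF i] False dn by linarith
        ultimately show "tr A d i = Some (gpow n (nat (int n + d)) i)"
          using i dn False r[OF i] by (simp add: gpow_eq tr_def)
      qed
    qed
  qed
  have op: "order_preserving (tr A d)"
    unfolding order_preserving_def dom_tr using r by (auto simp: tr_def)
  show ?thesis using si ci op by (simp add: OCI_def CI_def)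
qed

lemma OCI_tr: "\<alpha> \<in> OCI n \<Longrightarrow> \<exists>A d. A \<subseteq> {1..n} \<and> (\<forall>i\<in>A. 1 \<le> int i + d \<and> int i + d \<le> int n) \<and> \<alpha> = tr A d"
proof -
  assume a: "\<alpha> \<in> OCI n"
  then have si: "dom \<alpha> \<subseteq> {1..n}" and op: "order_preserving \<alpha>"
    by (auto simp: OCI_def CI_def sym_inv_def)
  from a obtain k where k: "k < n" "\<And>i. i \<in> dom \<alpha> \<Longrightarrow> \<alpha> i = Some (gpow n k i)"
    by (auto simp: OCI_def CI_def)
  define A where "A = dom \<alpha>"
  have bnd: "\<And>i. i \<in> A \<Longrightarrow> 1 \<le> i \<and> i \<le> n" using si unfolding A_def by auto
  have g: "\<alpha> i = Some (if i + k \<le> n then i + k else i + k - n)" if "i \<in> A" for i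
  proof -
    have "\<alpha> i = Some (gpow n k i)" using k(2) that unfolding A_def by blast
    then show ?thesis using gpow_eq[of i k] bnd[OF that] k(1) by simp
  qed
  have same: "j + k \<le> n" if ij0: "i \<in> A" "j \<in> A" "i + k \<le> n" for i j
  proof (rule ccontr)
    assume "\<not> j + k \<le> n"
    then have ij: "i \<in> A" "j \<in> A" "i + k \<le> n" "\<not> j + k \<le> n" using ij0 by auto
    then have "i \<le> j" by linarith
    then have "the (\<alpha> i) \<le> the (\<alpha> j)" using op ij unfolding order_preserving_def A_def by blast
    then have "i + k \<le> j + k - n" using g[OF ij(1)] g[OF ij(2)] ij by simp
    moreover have "1 \<le> i" "j \<le> n" using bnd ij by auto
    ultimately show False by linarith
  qed
  show ?thesis
  proof (cases "\<exists>i\<in>A. i + k \<le> n")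
    case True
    then have all: "\<And>j. j \<in> A \<Longrightarrow> j + k \<le> n" using same by blast
    show ?thesis
    proof (intro exI conjI)
      show "A \<subseteq> {1..n}" using si A_def by simp
      show "\<forall>i\<in>A. 1 \<le> int i + int k \<and> int i + int k \<le> int n"
      proof
        fix i assume "i \<in> A" then show "1 \<le> int i + int k \<and> int i + int k \<le> int n"
          using all[of i] bnd[of i] by simp
      qed
      show "\<alpha> = tr A (int k)"
      proof
        fix i show "\<alpha> i = tr A (int k) i"
          using g[of i] all[of i] by (cases "i \<in> A") (auto simp: tr_def A_def nat_add_distrib)
      qed
    qed
  next
    case False
    then have all: "\<And>j. j \<in> A \<Longrightarrow> \<not> j + k \<le> n" by blast
    show ?thesis
    proof (intro exI conjI)
      show "A \<subseteq> {1..n}" using si A_def by simp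
      show "\<forall>i\<in>A. 1 \<le> int i + (int k - int n) \<and> int i + (int k - int n) \<le> int n"
      proof
        fix i assume "i \<in> A" then show "1 \<le> int i + (int k - int n) \<and> int i + (int k - int n) \<le> int n"
          using all[of i] bnd[of i] k(1) by simp
      qed
      show "\<alpha> = tr A (int k - int n)"
      proof
        fix i show "\<alpha> i = tr A (int k - int n) i"
        proof (cases "i \<in> A")
          case True
          then have "\<not> i + k \<le> n" using all by blast
          moreover have "nat (int i + (int k - int n)) = i + k - n" using calculation by linarith
          ultimately show ?thesis using g[OF True] True by (simp add: tr_def)
        next
          case False then show ?thesis by (auto simp: tr_def A_def)
        qed
      qed
    qed
  qed
qed

lemma gen_OCI: "a \<in> Dgens n \<Longrightarrow> gen_map n a \<in> OCI n"
proof (cases a)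
  case X then show ?thesis by (simp add: genX_tr) (rule tr_OCI, auto)
next
  case Y then show ?thesis by (simp add: genY_tr) (rule tr_OCI, auto)
next
  case (E k) then show ?thesis by (simp add: genE_tr) (rule tr_OCI, auto)
qed

lemma gen_inj: "inj_on (gen_map n) (Dgens n)"
proof (rule inj_onI)
  fix a b assume a: "a \<in> Dgens n" and b: "b \<in> Dgens n" and e: "gen_map n a = gen_map n b"
  have e1: "gen_map n a 1 = gen_map n b 1" using e by simp
  show "a = b"
  proof (cases a)
    case X then show ?thesis using e1 b n3 by (cases b) (auto simp: gen_map_def Dgens_def split: if_splits)
  next
    case Y then show ?thesis using e1 b n3 by (cases b) (auto simp: gen_map_def Dgens_def split: if_splits)
  next
    case (E i)
    then have i: "2 \<le> i" "i \<le> n - 1" using a by (auto simp: Dgens_def)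
    show ?thesis
    proof (cases b)
      case (E j)
      then have j: "2 \<le> j" "j \<le> n - 1" using b by (auto simp: Dgens_def)
      have "gen_map n a i = gen_map n b i" using e by simp
      then show ?thesis using \<open>a = E i\<close> E i j by (auto simp: gen_map_def split: if_splits)
    qed (use e1 \<open>a = E i\<close> i n3 in \<open>auto simp: gen_map_def split: if_splits\<close>)
  qed
qed

lemma pres: "monoid_presentation (Dgens n) (Vrels n) (gen_map n) pcomp (pid n) (OCI n)"
  unfolding monoid_presentation_def
proof (intro conjI ballI)
  show "Vrels n \<subseteq> lists (Dgens n) \<times> lists (Dgens n)" by (rule V_lists)
  show "inj_on (gen_map n) (Dgens n)" by (rule gen_inj)
  show "gen_map n ` Dgens n \<subseteq> OCI n" using gen_OCI by blast
  show "word_eval pcomp (pid n) (gen_map n) ` lists (Dgens n) = OCI n"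
  proof
    show "word_eval pcomp (pid n) (gen_map n) ` lists (Dgens n) \<subseteq> OCI n"
    proof
      fix \<alpha> assume "\<alpha> \<in> word_eval pcomp (pid n) (gen_map n) ` lists (Dgens n)"
      then obtain w where w: "w \<in> lists (Dgens n)" "\<alpha> = ev w" by (auto simp: ev_def)
      obtain S d where sd: "st w = (S, d)" by fastforce
      have "ev w = tr (dm S d) d" using sound[OF norm[OF w(1)]] sd by (simp add: ev_wd)
      moreover have "tr (dm S d) d \<in> OCI n"
        by (rule tr_OCI) (auto simp: dm_def)
      ultimately show "\<alpha> \<in> OCI n" using w by simp
    qed
    show "OCI n \<subseteq> word_eval pcomp (pid n) (gen_map n) ` lists (Dgens n)"
    proof
      fix \<alpha> assume "\<alpha> \<in> OCI n"
      then obtain A d where A: "A \<subseteq> {1..n}" "\<forall>i\<in>A. 1 \<le> int i + d \<and> int i + d \<le> int n" "\<alpha> = tr A d"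
        using OCI_tr by blast
      have "dm (UNIV - A) d = A" using A by (auto simp: dm_def)
      then have "ev (wd (UNIV - A, d)) = \<alpha>" using A by (simp add: ev_wd)
      then show "\<alpha> \<in> word_eval pcomp (pid n) (gen_map n) ` lists (Dgens n)"
        unfolding ev_def using wd_in by blast
    qed
  qed
  fix u v assume u: "u \<in> lists (Dgens n)" and v: "v \<in> lists (Dgens n)"
  show "(word_eval pcomp (pid n) (gen_map n) u = word_eval pcomp (pid n) (gen_map n) v) =
        ((u, v) \<in> gen_cong (Dgens n) (Vrels n))"
    using complete[OF u v] sound unfolding ev_def eqv_def by blast
qed

end



lemma card_D: "3 \<le> n \<Longrightarrow> card (Dgens n) = n"
proof -
  assume n: "3 \<le> n"
  have "card (E ` {2..n-1}) = n - 2" by (subst card_image) (auto simp: inj_on_def)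
  moreover have "{X, Y} \<inter> E ` {2..n-1} = {}" by auto
  ultimately have "card (Dgens n) = 2 + (n - 2)" unfolding Dgens_def
    by (subst card_Un_disjoint) auto
  then show ?thesis using n by simp
qed

lemma card_pairs: "2 * card {(i, j::nat). a \<le> i \<and> i < j \<and> j < a + m} = m * (m - 1)"
proof (induction m)
  case 0
  have "{(i, j::nat). a \<le> i \<and> i < j \<and> j < a + 0} = {}" by auto
  then show ?case by (metis card.empty mult_0_right mult_0)
next
  case (Suc m)
  have eq: "{(i, j::nat). a \<le> i \<and> i < j \<and> j < a + Suc m} =
            {(i, j::nat). a \<le> i \<and> i < j \<and> j < a + m} \<union> ({a..<a+m} \<times> {a+m})" by auto
  have fin: "finite {(i, j::nat). a \<le> i \<and> i < j \<and> j < a + m}"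
    by (rule finite_subset[of _ "{a..<a+m} \<times> {a..<a+m}"]) auto
  have "card {(i, j::nat). a \<le> i \<and> i < j \<and> j < a + Suc m} =
        card {(i, j::nat). a \<le> i \<and> i < j \<and> j < a + m} + m"
    unfolding eq by (subst card_Un_disjoint) (use fin in auto)
  then show ?case using Suc by (cases m) (auto simp: algebra_simps)
qed

lemma card_V: "3 \<le> n \<Longrightarrow> card (Vrels n) = (n\<^sup>2 + 3 * n) div 2"
proof -
  assume n: "3 \<le> n"
  define P where "P = {(i, j::nat). 2 \<le> i \<and> i < j \<and> j < 2 + (n - 2)}"
  have cP: "2 * card P = (n - 2) * (n - 2 - 1)" unfolding P_def using card_pairs[of 2 "n - 2"] by simp
  have finP: "finite P" unfolding P_def by (rule finite_subset[of _ "{0..<n} \<times> {0..<n}"]) auto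
  define A1 where "A1 = (\<lambda>i. ([E i, E i], [E i])) ` {2..n-1}"
  define A2 where "A2 = {([X, Y, X], [X]), ([Y, X, Y], [Y])}"
  define A3 where "A3 = {([Y, X, X, Y], [X, Y, Y, X])}"
  define A4 where "A4 = (\<lambda>(i, j). ([E i, E j], [E j, E i])) ` P"
  define A5 where "A5 = (\<lambda>i. ([X, Y, E i], [E i, X, Y])) ` {2..n-1}"
  define A6 where "A6 = (\<lambda>i. ([Y, X, E i], [E i, Y, X])) ` {2..n-1}"
  define A7 where "A7 = (\<lambda>i. ([X, E (i + 1)], [E i, X])) ` {2..n-2}"
  define A8 where "A8 = {([X, X, Y], [E (n - 1), X]), ([Y, X, X], [X, E 2])}"
  define A9 where "A9 = {([Y, X] @ map E [2..<n] @ [X, Y], [X] @ map E [2..<n] @ [X, Y])}"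
  have V: "Vrels n = A1 \<union> A2 \<union> A3 \<union> A4 \<union> A5 \<union> A6 \<union> A7 \<union> A8 \<union> A9"
  proof -
    have e1: "{([E i, E i], [E i]) |i. 2 \<le> i \<and> i \<le> n - 1} = A1" unfolding A1_def by auto
    have e4: "{([E i, E j], [E j, E i]) |i j. 2 \<le> i \<and> i < j \<and> j \<le> n - 1} = A4"
    proof
      show "{([E i, E j], [E j, E i]) |i j. 2 \<le> i \<and> i < j \<and> j \<le> n - 1} \<subseteq> A4"
      proof
        fix x assume "x \<in> {([E i, E j], [E j, E i]) |i j. 2 \<le> i \<and> i < j \<and> j \<le> n - 1}"
        then obtain i j where "x = ([E i, E j], [E j, E i])" "2 \<le> i" "i < j" "j \<le> n - 1" by blast
        moreover have "(i, j) \<in> P" using calculation n unfolding P_def by auto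
        ultimately show "x \<in> A4" unfolding A4_def by force
      qed
      show "A4 \<subseteq> {([E i, E j], [E j, E i]) |i j. 2 \<le> i \<and> i < j \<and> j \<le> n - 1}"
        unfolding A4_def P_def using n by auto
    qed
    have e5: "{([X, Y, E i], [E i, X, Y]) |i. 2 \<le> i \<and> i \<le> n - 1} = A5" unfolding A5_def by auto
    have e6: "{([Y, X, E i], [E i, Y, X]) |i. 2 \<le> i \<and> i \<le> n - 1} = A6" unfolding A6_def by auto
    have e7: "{([X, E (i + 1)], [E i, X]) |i. 2 \<le> i \<and> i \<le> n - 2} = A7" unfolding A7_def by auto
    show ?thesis unfolding Vrels_def e1 e4 e5 e6 e7 A2_def A3_def A8_def A9_def by simp
  qed
  have c1: "card A1 = n - 2" unfolding A1_def by (subst card_image) (auto simp: inj_on_def)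
  have c2: "card A2 = 2" unfolding A2_def by simp
  have c3: "card A3 = 1" unfolding A3_def by simp
  have c4: "card A4 = card P" unfolding A4_def by (subst card_image) (auto simp: inj_on_def)
  have c5: "card A5 = n - 2" unfolding A5_def by (subst card_image) (auto simp: inj_on_def)
  have c6: "card A6 = n - 2" unfolding A6_def by (subst card_image) (auto simp: inj_on_def)
  have c7: "card A7 = n - 3" unfolding A7_def by (subst card_image) (auto simp: inj_on_def)
  have c8: "card A8 = 2" unfolding A8_def using n by simp
  have c9: "card A9 = 1" unfolding A9_def by simp
  have f: "finite A1" "finite A2" "finite A3" "finite A4" "finite A5" "finite A6" "finite A7" "finite A8" "finite A9"
    unfolding A1_def A2_def A3_def A4_def A5_def A6_def A7_def A8_def A9_def using finP by auto
  have d2: "A1 \<inter> A2 = {}" unfolding A1_def A2_def by auto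
  have d3: "(A1 \<union> A2) \<inter> A3 = {}" unfolding A1_def A2_def A3_def by auto
  have d4: "(A1 \<union> A2 \<union> A3) \<inter> A4 = {}" unfolding A1_def A2_def A3_def A4_def by auto
  have d5: "(A1 \<union> A2 \<union> A3 \<union> A4) \<inter> A5 = {}" unfolding A1_def A2_def A3_def A4_def A5_def by auto
  have d6: "(A1 \<union> A2 \<union> A3 \<union> A4 \<union> A5) \<inter> A6 = {}" unfolding A1_def A2_def A3_def A4_def A5_def A6_def by auto
  have d7: "(A1 \<union> A2 \<union> A3 \<union> A4 \<union> A5 \<union> A6) \<inter> A7 = {}"
    unfolding A1_def A2_def A3_def A4_def A5_def A6_def A7_def by auto
  have d8: "(A1 \<union> A2 \<union> A3 \<union> A4 \<union> A5 \<union> A6 \<union> A7) \<inter> A8 = {}"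
    unfolding A1_def A2_def A3_def A4_def A5_def A6_def A7_def A8_def by auto
  have d9: "(A1 \<union> A2 \<union> A3 \<union> A4 \<union> A5 \<union> A6 \<union> A7 \<union> A8) \<inter> A9 = {}"
  proof -
    have "length (fst x) \<le> 4" if "x \<in> A1 \<union> A2 \<union> A3 \<union> A4 \<union> A5 \<union> A6 \<union> A7 \<union> A8" for x
      using that unfolding A1_def A2_def A3_def A4_def A5_def A6_def A7_def A8_def by auto
    moreover have "length (fst x) = n + 2" if "x \<in> A9" for x using that n unfolding A9_def by auto
    ultimately show ?thesis using n by fastforce
  qed
  have "card (Vrels n) = card A1 + card A2 + card A3 + card A4 + card A5 + card A6 + card A7 + card A8 + card A9"
    unfolding V using f d2 d3 d4 d5 d6 d7 d8 d9 by (simp add: card_Un_disjoint)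
  then have cV: "card (Vrels n) = (n - 2) + 2 + 1 + card P + (n - 2) + (n - 2) + (n - 3) + 2 + 1"
    using c1 c2 c3 c4 c5 c6 c7 c8 c9 by simp
  obtain m where m: "n = m + 3" using n by (metis add.commute le_iff_add)
  have a: "card (Vrels n) = 4 * m + 9 + card P" using cV m by simp
  have b: "2 * card P = (m + 1) * m" using cP m by simp
  have c: "n\<^sup>2 + 3 * n = 2 * (4 * m + 9) + (m + 1) * m" using m by (simp add: power2_eq_square algebra_simps)
  show ?thesis unfolding a c b[symmetric] by simp
qed

theorem theorem2p17:
  fixes n :: nat
  assumes "n \<ge> 3"
  shows "monoid_presentation (Dgens n) (Vrels n) (gen_map n) pcomp (pid n) (OCI n)
         \<and> card (Dgens n) = n \<and> card (Vrels n) = (n\<^sup>2 + 3 * n) div 2"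
proof -
  interpret P n using assms by unfold_locales
  show ?thesis using pres card_D[OF assms] card_V[OF assms] by simp
qed

end
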